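(* Let $\Gamma$ be a finite set of formulas and $\alpha$ a formula, all in negation normal form, of the language $\{\rightarrow,\sim,\neg\}$. Then $\Gamma\vdash_{\text{Ł}(\neg)}\alpha$ if and only if there is a finite set $\Delta$ consisting of instances of the $\neg$-axioms such that $\boxdot\Gamma,\Delta\vdash_{\text{Ł}}\alpha$.
   Context: Formulas are built from a countable set of propositional variables using the connectives $\rightarrow$ (binary), $\sim$ and $\neg$ (unary). Write $\alpha\leftrightarrow\beta$ as shorthand for the pair of formulas $\alpha\rightarrow\beta$ and $\beta\rightarrow\alpha$ (an axiom of the form $\alpha\leftrightarrow\beta$ means both are axioms). Łukasiewicz logic $\vdash_{\text{Ł}}$ is axiomatized by the axiom schemes $\alpha\rightarrow(\beta\rightarrow\alpha)$; $(\alpha\rightarrow\beta)\rightarrow((\beta\rightarrow\gamma)\rightarrow(\alpha\rightarrow\gamma))$; $((\alpha\rightarrow\beta)\rightarrow\beta)\rightarrow((\beta\rightarrow\alpha)\rightarrow\alpha)$; $({\sim}\beta\rightarrow{\sim}\alpha)\rightarrow(\alpha\rightarrow\beta)$; and the rule Modus Ponens $\alpha,\alpha\rightarrow\beta/\beta$. When $\vdash_{\text{Ł}}$ is applied to formulas of the language $\{\rightarrow,\sim,\neg\}$, every formula whose main connective is $\neg$ is treated as an atomic formula. The logic $\text{Ł}(\neg)$ (consequence relation $\vdash_{\text{Ł}(\neg)}$) extends Łukasiewicz logic by the $\neg$-axioms $\neg\neg\alpha\leftrightarrow\alpha$; $\neg{\sim}\alpha\leftrightarrow{\sim}\neg\alpha$;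 $({\sim}\neg\alpha\rightarrow{\sim}\neg\beta)\leftrightarrow{\sim}\neg(\alpha\rightarrow\beta)$; and the rule $\alpha/{\sim}\neg\alpha$. A formula is in negation normal form if it is built using $\rightarrow,\sim$ only from literals of the form $p$ or $\neg p$ with $p$ a propositional variable. For a set $\Gamma$ of formulas, $\boxdot\Gamma:=\{{\sim}\neg\gamma:\gamma\in\Gamma\}\cup\Gamma$. *)

theory Defs
  imports Main
begin

text \<open>Formulas over countably many variables (indexed by nat) with connectives
  implication, strong negation (Sim) and the extra negation (Neg).\<close>
datatype fm = Var nat | Imp fm fm | Sim fm | Neg fm

text \<open>Biconditional axioms are represented as a pair of implications.\<close>
definition iff_pair :: "fm \<Rightarrow> fm \<Rightarrow> fm set" where
  "iff_pair a b = {Imp a b, Imp b a}"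

text \<open>Axiom schemes of Lukasiewicz logic; Neg-formulas are arbitrary formulas
  here, i.e. they behave as atoms for the Lukasiewicz calculus.\<close>
inductive luk_axiom :: "fm \<Rightarrow> bool" where
  A1: "luk_axiom (Imp a (Imp b a))"
| A2: "luk_axiom (Imp (Imp a b) (Imp (Imp b c) (Imp a c)))"
| A3: "luk_axiom (Imp (Imp (Imp a b) b) (Imp (Imp b a) a))"
| A4: "luk_axiom (Imp (Imp (Sim b) (Sim a)) (Imp a b))"

inductive luk_derives :: "fm set \<Rightarrow> fm \<Rightarrow> bool" where
  L_ax: "luk_axiom a \<Longrightarrow> luk_derives G a"
| L_hyp: "a \<in> G \<Longrightarrow> luk_derives G a"
| L_mp: "luk_derives G a \<Longrightarrow> luk_derives G (Imp a b) \<Longrightarrow> luk_derives G b"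

definition neg_axioms :: "fm set" where
  "neg_axioms =
     (\<Union>a. iff_pair (Neg (Neg a)) a)
   \<union> (\<Union>a. iff_pair (Neg (Sim a)) (Sim (Neg a)))
   \<union> (\<Union>a. \<Union>b. iff_pair (Imp (Sim (Neg a)) (Sim (Neg b))) (Sim (Neg (Imp a b))))"

inductive lukneg_derives :: "fm set \<Rightarrow> fm \<Rightarrow> bool" where
  N_ax: "luk_axiom a \<Longrightarrow> lukneg_derives G a"
| N_negax: "a \<in> neg_axioms \<Longrightarrow> lukneg_derives G a"
| N_hyp: "a \<in> G \<Longrightarrow> lukneg_derives G a"
| N_mp: "lukneg_derives G a \<Longrightarrow> lukneg_derives G (Imp a b) \<Longrightarrow> lukneg_derives G b"
| N_box: "lukneg_derives G a \<Longrightarrow> lukneg_derives G (Sim (Neg a))"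

fun nnf :: "fm \<Rightarrow> bool" where
  "nnf (Var p) = True"
| "nnf (Neg (Var p)) = True"
| "nnf (Neg _) = False"
| "nnf (Imp a b) = (nnf a \<and> nnf b)"
| "nnf (Sim a) = nnf a"

definition boxdot :: "fm set \<Rightarrow> fm set" where
  "boxdot G = {Sim (Neg g) | g. g \<in> G} \<union> G"

end

theory Submission
  imports Defs
begin

lemma K: "luk_derives G (Imp a (Imp b a))" by (intro L_ax A1)
lemma B: "luk_derives G (Imp (Imp a b) (Imp (Imp b c) (Imp a c)))" by (intro L_ax A2)
lemma L: "luk_derives G (Imp (Imp (Imp a b) b) (Imp (Imp b a) a))" by (intro L_ax A3)
lemma N: "luk_derives G (Imp (Imp (Sim b) (Sim a)) (Imp a b))" by (intro L_ax A4)
lemmas MP = L_mp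
lemma C: "luk_derives G (Imp (Imp x (Imp y z)) (Imp y (Imp x z)))"
  by (meson B K L MP)
lemma I: "luk_derives G (Imp x x)"
  by (metis B K L MP)
lemma dn2: "luk_derives G (Imp (Sim (Sim x)) x)"
  by (metis B L N MP C I)
lemma dn1: "luk_derives G (Imp x (Sim (Sim x)))"
  by (metis B L N MP C I)
lemma contra: "luk_derives G (Imp (Imp x y) (Imp (Sim y) (Sim x)))"
proof -
  have f1: "\<forall>F f fa fb. luk_derives F (Imp (Imp f fa) (Imp (Imp fa fb) (Imp f fb)))"
    using B by blast
  have f2: "\<forall>F f fa. luk_derives F f \<longrightarrow> luk_derives F (Imp f fa) \<longrightarrow> luk_derives F fa"
    using MP by blast
  then have f3: "\<forall>f fa F fb. luk_derives F fb \<or> \<not> luk_derives F (Imp (Imp (Imp (Sim f) (Sim fa)) (Imp fa f)) fb)"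
    using N by blast
  then have f4: "\<forall>f F fa. luk_derives F fa \<or> \<not> luk_derives F (Imp (Imp (Sim (Sim f)) f) fa)"
    using f2 f1 by (metis (no_types) C K)
  then have "\<forall>f fa F. luk_derives F (Imp (Imp (Sim f) fa) (Imp (Sim fa) f))"
    using f3 f2 f1 by (metis C)
  then show ?thesis
    using f4 f2 f1 by (metis (no_types))
qed

lemma trans: "luk_derives G (Imp x y) \<Longrightarrow> luk_derives G (Imp y z) \<Longrightarrow> luk_derives G (Imp x z)"
  by (meson B MP)

lemma imp_cong: "luk_derives G (Imp a' a) \<Longrightarrow> luk_derives G (Imp b b') \<Longrightarrow>
   luk_derives G (Imp (Imp a b) (Imp a' b'))"
proof -
  assume h1: "luk_derives G (Imp a' a)" and h2: "luk_derives G (Imp b b')"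
  have "luk_derives G (Imp (Imp a b) (Imp a' b))" using h1 B MP by blast
  moreover have "luk_derives G (Imp (Imp a' b) (Imp a' b'))"
  proof -
    have "luk_derives G (Imp (Imp a' b) (Imp (Imp b b') (Imp a' b')))" by (rule B)
    then have "luk_derives G (Imp (Imp b b') (Imp (Imp a' b) (Imp a' b')))" using C MP by blast
    then show ?thesis using h2 MP by blast
  qed
  ultimately show ?thesis by (rule trans)
qed

lemma sim_cong: "luk_derives G (Imp a b) \<Longrightarrow> luk_derives G (Imp (Sim b) (Sim a))"
  using contra MP by blast

lemma mono: "luk_derives G x \<Longrightarrow> G \<subseteq> H \<Longrightarrow> luk_derives H x"
  by (induction rule: luk_derives.induct) (auto intro: luk_derives.intros)

fun tr :: "fm \<Rightarrow> fm" where
  "tr (Var p) = Sim (Neg (Var p))"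
| "tr (Imp a b) = Imp (tr a) (tr b)"
| "tr (Sim a) = Sim (tr a)"
| "tr (Neg a) = Sim a"

lemma tr_ax: "luk_axiom A \<Longrightarrow> luk_axiom (tr A)"
  by (induction rule: luk_axiom.induct) (auto intro: luk_axiom.intros)

lemma na1: "Imp (Neg (Neg a)) a \<in> neg_axioms" "Imp a (Neg (Neg a)) \<in> neg_axioms"
  "Imp (Neg (Sim a)) (Sim (Neg a)) \<in> neg_axioms" "Imp (Sim (Neg a)) (Neg (Sim a)) \<in> neg_axioms"
  "Imp (Imp (Sim (Neg a)) (Sim (Neg b))) (Sim (Neg (Imp a b))) \<in> neg_axioms"
  "Imp (Sim (Neg (Imp a b))) (Imp (Sim (Neg a)) (Sim (Neg b))) \<in> neg_axioms"
  unfolding neg_axioms_def iff_pair_def by blast+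

lemma tr_eq: "\<exists>\<Delta>. finite \<Delta> \<and> \<Delta> \<subseteq> neg_axioms \<and>
   luk_derives \<Delta> (Imp (tr b) (Sim (Neg b))) \<and> luk_derives \<Delta> (Imp (Sim (Neg b)) (tr b))"
proof (induction b)
  case (Var x)
  then show ?case using I by auto
next
  case (Imp a b)
  from Imp.IH(1) obtain D1 where d1: "finite D1" "D1 \<subseteq> neg_axioms"
    "luk_derives D1 (Imp (tr a) (Sim (Neg a)))" "luk_derives D1 (Imp (Sim (Neg a)) (tr a))" by blast
  from Imp.IH(2) obtain D2 where d2: "finite D2" "D2 \<subseteq> neg_axioms"
    "luk_derives D2 (Imp (tr b) (Sim (Neg b)))" "luk_derives D2 (Imp (Sim (Neg b)) (tr b))" by blast
  let ?X = "Imp (Imp (Sim (Neg a)) (Sim (Neg b))) (Sim (Neg (Imp a b)))"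
  let ?Y = "Imp (Sim (Neg (Imp a b))) (Imp (Sim (Neg a)) (Sim (Neg b)))"
  define D where "D = D1 \<union> D2 \<union> {?X, ?Y}"
  have s1: "D1 \<subseteq> D" "D2 \<subseteq> D" unfolding D_def by auto
  have x: "luk_derives D ?X" "luk_derives D ?Y" unfolding D_def by (auto intro: L_hyp)
  have e1: "luk_derives D (Imp (tr a) (Sim (Neg a)))" "luk_derives D (Imp (Sim (Neg a)) (tr a))"
    "luk_derives D (Imp (tr b) (Sim (Neg b)))" "luk_derives D (Imp (Sim (Neg b)) (tr b))"
    using d1 d2 s1 mono by blast+
  have "luk_derives D (Imp (tr (Imp a b)) (Sim (Neg (Imp a b))))"
    using trans[OF imp_cong[OF e1(2) e1(3)] x(1)] by simp
  moreover have "luk_derives D (Imp (Sim (Neg (Imp a b))) (tr (Imp a b)))"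
    using trans[OF x(2) imp_cong[OF e1(1) e1(4)]] by simp
  moreover have "finite D" "D \<subseteq> neg_axioms" unfolding D_def using d1 d2 na1 by auto
  ultimately show ?case by blast
next
  case (Sim a)
  from Sim.IH obtain D1 where d1: "finite D1" "D1 \<subseteq> neg_axioms"
    "luk_derives D1 (Imp (tr a) (Sim (Neg a)))" "luk_derives D1 (Imp (Sim (Neg a)) (tr a))" by blast
  let ?X = "Imp (Neg (Sim a)) (Sim (Neg a))"
  let ?Y = "Imp (Sim (Neg a)) (Neg (Sim a))"
  define D where "D = D1 \<union> {?X, ?Y}"
  have s1: "D1 \<subseteq> D" unfolding D_def by auto
  have x: "luk_derives D ?X" "luk_derives D ?Y" unfolding D_def by (auto intro: L_hyp)
  have e1: "luk_derives D (Imp (tr a) (Sim (Neg a)))" "luk_derives D (Imp (Sim (Neg a)) (tr a))"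
    using d1 s1 mono by blast+
  have "luk_derives D (Imp (tr (Sim a)) (Sim (Neg (Sim a))))"
    using trans[OF sim_cong[OF e1(2)] sim_cong[OF x(1)]] by simp
  moreover have "luk_derives D (Imp (Sim (Neg (Sim a))) (tr (Sim a)))"
    using trans[OF sim_cong[OF x(2)] sim_cong[OF e1(1)]] by simp
  moreover have "finite D" "D \<subseteq> neg_axioms" unfolding D_def using d1 na1 by auto
  ultimately show ?case by blast
next
  case (Neg a)
  let ?X = "Imp (Neg (Neg a)) a"
  let ?Y = "Imp a (Neg (Neg a))"
  define D where "D = {?X, ?Y}"
  have x: "luk_derives D ?X" "luk_derives D ?Y" unfolding D_def by (auto intro: L_hyp)
  have "luk_derives D (Imp (tr (Neg a)) (Sim (Neg (Neg a))))"
    using sim_cong[OF x(1)] by simp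
  moreover have "luk_derives D (Imp (Sim (Neg (Neg a))) (tr (Neg a)))"
    using sim_cong[OF x(2)] by simp
  moreover have "finite D" "D \<subseteq> neg_axioms" unfolding D_def using na1 by auto
  ultimately show ?case by blast
qed

lemma tr_to: "luk_derives G (tr b) \<Longrightarrow> \<exists>\<Delta>. finite \<Delta> \<and> \<Delta> \<subseteq> neg_axioms \<and>
   luk_derives (G \<union> \<Delta>) (Sim (Neg b))"
proof -
  assume h: "luk_derives G (tr b)"
  obtain D where d: "finite D" "D \<subseteq> neg_axioms" "luk_derives D (Imp (tr b) (Sim (Neg b)))"
    using tr_eq by blast
  have "luk_derives (G \<union> D) (Sim (Neg b))"
    using MP[OF mono[OF h] mono[OF d(3)]] by blast
  then show ?thesis using d by blast
qed

lemma negax_tr: "a \<in> neg_axioms \<Longrightarrow> \<exists>\<Delta>. finite \<Delta> \<and> \<Delta> \<subseteq> neg_axioms \<and> luk_derives \<Delta> (tr a)"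
proof -
  assume "a \<in> neg_axioms"
  then consider (c1) x where "a = Imp (Neg (Neg x)) x" | (c2) x where "a = Imp x (Neg (Neg x))"
    | (c3) x where "a = Imp (Neg (Sim x)) (Sim (Neg x))" | (c4) x where "a = Imp (Sim (Neg x)) (Neg (Sim x))"
    | (c5) x y where "a = Imp (Imp (Sim (Neg x)) (Sim (Neg y))) (Sim (Neg (Imp x y)))"
    | (c6) x y where "a = Imp (Sim (Neg (Imp x y))) (Imp (Sim (Neg x)) (Sim (Neg y)))"
    unfolding neg_axioms_def iff_pair_def by blast
  then show ?thesis
  proof cases
    case c1
    then show ?thesis using tr_eq[of x] by auto
  next
    case c2
    then show ?thesis using tr_eq[of x] by auto
  next
    case c3
    then show ?thesis using I by (intro exI[of _ "{}"]) auto
  next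
    case c4
    then show ?thesis using I by (intro exI[of _ "{}"]) auto
  next
    case c5
    have "luk_derives {} (Imp (Imp (Sim (Sim x)) (Sim (Sim y))) (Sim (Sim (Imp x y))))"
      using trans[OF imp_cong[OF dn1 dn2] dn1] .
    then show ?thesis using c5 by (intro exI[of _ "{}"]) auto
  next
    case c6
    have "luk_derives {} (Imp (Sim (Sim (Imp x y))) (Imp (Sim (Sim x)) (Sim (Sim y))))"
      using trans[OF dn2 imp_cong[OF dn2 dn1]] .
    then show ?thesis using c6 by (intro exI[of _ "{}"]) auto
  qed
qed

lemma fwd: "lukneg_derives G b \<Longrightarrow> \<exists>\<Delta>. finite \<Delta> \<and> \<Delta> \<subseteq> neg_axioms \<and>
   luk_derives (boxdot G \<union> \<Delta>) b \<and> luk_derives (boxdot G \<union> \<Delta>) (Sim (Neg b))"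
proof (induction rule: lukneg_derives.induct)
  case (N_ax a G)
  have "luk_derives (boxdot G) (tr a)" using N_ax tr_ax L_ax by blast
  then obtain D where "finite D" "D \<subseteq> neg_axioms" "luk_derives (boxdot G \<union> D) (Sim (Neg a))"
    using tr_to by blast
  moreover have "luk_derives (boxdot G \<union> D) a" using N_ax L_ax by blast
  ultimately show ?case by blast
next
  case (N_negax a G)
  obtain D where d: "finite D" "D \<subseteq> neg_axioms" "luk_derives D (tr a)"
    using negax_tr[OF N_negax] by blast
  have "luk_derives (boxdot G \<union> D) (tr a)" by (rule mono[OF d(3)]) auto
  from tr_to[OF this] obtain D2 where d2: "finite D2" "D2 \<subseteq> neg_axioms"
    "luk_derives (boxdot G \<union> D \<union> D2) (Sim (Neg a))" by blast
  define E where "E = D \<union> D2 \<union> {a}"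
  have 1: "luk_derives (boxdot G \<union> E) (Sim (Neg a))" unfolding E_def by (rule mono[OF d2(3)]) auto
  have 2: "luk_derives (boxdot G \<union> E) a" unfolding E_def by (rule L_hyp) simp
  have 3: "finite E" "E \<subseteq> neg_axioms" unfolding E_def using d d2 N_negax by auto
  show ?case using 1 2 3 by blast
next
  case (N_hyp a G)
  then have "a \<in> boxdot G" "Sim (Neg a) \<in> boxdot G" unfolding boxdot_def by auto
  then show ?case by (intro exI[of _ "{}"]) (auto intro: L_hyp)
next
  case (N_mp G a b)
  from N_mp.IH(1) obtain D1 where d1: "finite D1" "D1 \<subseteq> neg_axioms"
    "luk_derives (boxdot G \<union> D1) a" "luk_derives (boxdot G \<union> D1) (Sim (Neg a))" by blast
  from N_mp.IH(2) obtain D2 where d2: "finite D2" "D2 \<subseteq> neg_axioms"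
    "luk_derives (boxdot G \<union> D2) (Imp a b)" "luk_derives (boxdot G \<union> D2) (Sim (Neg (Imp a b)))" by blast
  define Y where "Y = Imp (Sim (Neg (Imp a b))) (Imp (Sim (Neg a)) (Sim (Neg b)))"
  define E where "E = D1 \<union> D2 \<union> {Y}"
  have s1: "boxdot G \<union> D1 \<subseteq> boxdot G \<union> E" "boxdot G \<union> D2 \<subseteq> boxdot G \<union> E"
    unfolding E_def by auto
  have e1: "luk_derives (boxdot G \<union> E) a" by (rule mono[OF d1(3) s1(1)])
  have e2: "luk_derives (boxdot G \<union> E) (Sim (Neg a))" by (rule mono[OF d1(4) s1(1)])
  have e3: "luk_derives (boxdot G \<union> E) (Imp a b)" by (rule mono[OF d2(3) s1(2)])
  have e4: "luk_derives (boxdot G \<union> E) (Sim (Neg (Imp a b)))" by (rule mono[OF d2(4) s1(2)])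
  have y: "luk_derives (boxdot G \<union> E) Y" unfolding E_def by (rule L_hyp) simp
  have 1: "luk_derives (boxdot G \<union> E) b" using MP[OF e1 e3] .
  have 2: "luk_derives (boxdot G \<union> E) (Sim (Neg b))"
    using MP[OF e2 MP[OF e4 y[unfolded Y_def]]] .
  have 3: "finite E" "E \<subseteq> neg_axioms" unfolding E_def Y_def using d1 d2 na1 by auto
  show ?case using 1 2 3 by blast
next
  case (N_box G a)
  from N_box.IH obtain D1 where d1: "finite D1" "D1 \<subseteq> neg_axioms"
    "luk_derives (boxdot G \<union> D1) a" "luk_derives (boxdot G \<union> D1) (Sim (Neg a))" by blast
  have "luk_derives (boxdot G \<union> D1) (tr (Sim (Neg a)))" using MP[OF d1(3) dn1] by simp
  then obtain D2 where d2: "finite D2" "D2 \<subseteq> neg_axioms"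
    "luk_derives (boxdot G \<union> D1 \<union> D2) (Sim (Neg (Sim (Neg a))))"
    using tr_to by blast
  have "luk_derives (boxdot G \<union> (D1 \<union> D2)) (Sim (Neg a))" by (rule mono[OF d1(4)]) auto
  moreover have "luk_derives (boxdot G \<union> (D1 \<union> D2)) (Sim (Neg (Sim (Neg a))))"
    using d2(3) by (simp add: Un_assoc)
  moreover have "finite (D1 \<union> D2)" "D1 \<union> D2 \<subseteq> neg_axioms" using d1 d2 by auto
  ultimately show ?case by blast
qed

lemma bwd: "luk_derives H a \<Longrightarrow> H = boxdot G \<union> \<Delta> \<Longrightarrow> \<Delta> \<subseteq> neg_axioms \<Longrightarrow> lukneg_derives G a"
proof (induction rule: luk_derives.induct)
  case (L_ax a G)
  then show ?case by (auto intro: lukneg_derives.intros)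
next
  case (L_hyp a G)
  then show ?case unfolding boxdot_def by (auto intro: lukneg_derives.intros)
next
  case (L_mp G a b)
  then show ?case by (auto intro: lukneg_derives.intros)
qed

theorem lemma1:
  assumes "finite \<Gamma>" and "\<forall>g\<in>\<Gamma>. nnf g" and "nnf \<alpha>"
  shows "lukneg_derives \<Gamma> \<alpha> \<longleftrightarrow>
    (\<exists>\<Delta>. finite \<Delta> \<and> \<Delta> \<subseteq> neg_axioms \<and> luk_derives (boxdot \<Gamma> \<union> \<Delta>) \<alpha>)"
proof
  assume "lukneg_derives \<Gamma> \<alpha>"
  from fwd[OF this] show "\<exists>\<Delta>. finite \<Delta> \<and> \<Delta> \<subseteq> neg_axioms \<and> luk_derives (boxdot \<Gamma> \<union> \<Delta>) \<alpha>"
    by blast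
next
  assume "\<exists>\<Delta>. finite \<Delta> \<and> \<Delta> \<subseteq> neg_axioms \<and> luk_derives (boxdot \<Gamma> \<union> \<Delta>) \<alpha>"
  then obtain D where "D \<subseteq> neg_axioms" "luk_derives (boxdot \<Gamma> \<union> D) \<alpha>" by blast
  then show "lukneg_derives \<Gamma> \<alpha>" using bwd by blast
qed

end
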